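(* Let $p$ be an odd prime, let $a$ be an integer with $a\not\equiv 0,\pm1\pmod p$, and let $n\ge 1$ with $T_n(a)\not\equiv\pm1\pmod p$. Define $\epsilon(b)=\left(\frac{b^2-1}{p}\right)$ and $\delta(b)=\left(\frac{2(b+1)}{p}\right)$ (Legendre symbols). Then $\epsilon(T_n(a))=\epsilon(a)$. Moreover $\delta(T_n(a))=1$ if $n$ is even and $\delta(T_n(a))=\delta(a)$ if $n$ is odd.
   Context: $T_n(x)$ denotes the Chebyshev polynomial of the first kind, the integer polynomial with $T_n(\cos\theta)=\cos n\theta$, equivalently $(x+\sqrt{x^2-1})^n=T_n(x)+U_{n-1}(x)\sqrt{x^2-1}$. *)

theory Defs
  imports "HOL-Number_Theory.Number_Theory"
begin

fun chebyshev_T :: "nat \<Rightarrow> 'a::comm_ring_1 \<Rightarrow> 'a" where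
  "chebyshev_T 0 x = 1"
| "chebyshev_T (Suc 0) x = x"
| "chebyshev_T (Suc (Suc n)) x = 2 * x * chebyshev_T (Suc n) x - chebyshev_T n x"

definition eps_sym :: "int \<Rightarrow> int \<Rightarrow> int" where
  "eps_sym p b = Legendre (b^2 - 1) p"

definition delta_sym :: "int \<Rightarrow> int \<Rightarrow> int" where
  "delta_sym p b = Legendre (2 * (b + 1)) p"

end

theory Submission
  imports Defs
begin

fun tu :: "int \<Rightarrow> nat \<Rightarrow> int \<times> int" where
  "tu x 0 = (1, 0)"
| "tu x (Suc n) = (x * fst (tu x n) + (x^2 - 1) * snd (tu x n), fst (tu x n) + x * snd (tu x n))"

lemma tu_T: "fst (tu x n) = chebyshev_T n x \<and> fst (tu x (Suc n)) = chebyshev_T (Suc n) x"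
proof (induction n)
  case 0 then show ?case by simp
next
  case (Suc n)
  obtain t u where tu: "tu x n = (t, u)" by fastforce
  have "fst (tu x (Suc (Suc n))) = 2 * x * fst (tu x (Suc n)) - fst (tu x n)"
    using tu by (simp add: algebra_simps power2_eq_square)
  moreover have a: "fst (tu x (Suc n)) = chebyshev_T (Suc n) x" using Suc.IH by blast
  moreover have b: "fst (tu x n) = chebyshev_T n x" using Suc.IH by blast
  ultimately have "fst (tu x (Suc (Suc n))) = chebyshev_T (Suc (Suc n)) x"
    unfolding chebyshev_T.simps(3) by (simp only:)
  then show ?case using a by simp
qed

lemma tu_norm: "fst (tu x n)^2 - (x^2 - 1) * snd (tu x n)^2 = 1"
proof (induction n)
  case 0 then show ?case by simp
next
  case (Suc n)
  then show ?case by (simp add: algebra_simps power2_eq_square)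
qed

lemma tu_add: "fst (tu x (m + n)) = fst (tu x m) * fst (tu x n) + (x^2-1) * snd (tu x m) * snd (tu x n)
  \<and> snd (tu x (m + n)) = fst (tu x m) * snd (tu x n) + snd (tu x m) * fst (tu x n)"
proof (induction m)
  case 0 then show ?case by simp
next
  case (Suc m)
  obtain t u where tu: "tu x m = (t, u)" by fastforce
  obtain t' u' where tu': "tu x n = (t', u')" by fastforce
  obtain t2 u2 where tu2: "tu x (m+n) = (t2, u2)" by fastforce
  have "t2 = t * t' + (x^2-1) * u * u'" "u2 = t * u' + u * t'" using Suc tu tu' tu2 by auto
  moreover have "tu x (Suc m + n) = (x * t2 + (x^2 - 1) * u2, t2 + x * u2)" using tu2 by simp
  moreover have "tu x (Suc m) = (x * t + (x^2 - 1) * u, t + x * u)" using tu by simp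
  moreover have "x * (t * t' + (x^2 - 1) * u * u') + (x^2 - 1) * (t * u' + u * t') = (x * t + (x^2 - 1) * u) * t' + (x^2 - 1) * (t + x * u) * u'"
    by (simp add: algebra_simps)
  moreover have "t * t' + (x^2 - 1) * u * u' + x * (t * u' + u * t') = (x * t + (x^2 - 1) * u) * u' + (t + x * u) * t'"
    by (simp add: algebra_simps)
  ultimately show ?case using tu' by (simp only: fst_conv snd_conv prod.inject)
qed

lemma legendre_sq:
  fixes p x w :: int
  assumes "prime p" "\<not> p dvd w"
  shows "Legendre (x * w^2) p = Legendre x p"
proof -
  have cop: "coprime w p" using assms
    by (simp add: prime_imp_coprime_int coprime_commute)
  then obtain v where v: "[w * v = 1] (mod p)" using cong_solve_coprime_int by blast
  have z: "[x * w^2 = 0] (mod p) \<longleftrightarrow> [x = 0] (mod p)"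
    using assms by (simp add: cong_0_iff prime_dvd_mult_iff prime_dvd_power_iff)
  have q: "QuadRes p (x * w^2) \<longleftrightarrow> QuadRes p x"
  proof
    assume "QuadRes p (x * w^2)"
    then obtain y where y: "[y^2 = x * w^2] (mod p)" unfolding QuadRes_def by blast
    have "[(y*v)^2 = x * w^2 * v^2] (mod p)"
      using cong_mult[OF y cong_refl[of "v^2"]] by (simp add: power_mult_distrib)
    moreover have "[x * w^2 * v^2 = x * 1^2] (mod p)"
      using cong_mult[OF cong_refl[of x] cong_pow[OF v, of 2]]
      by (simp add: power_mult_distrib algebra_simps)
    ultimately have "[(y*v)^2 = x] (mod p)" using cong_trans by fastforce
    then show "QuadRes p x" unfolding QuadRes_def by blast
  next
    assume "QuadRes p x"
    then obtain y where y: "[y^2 = x] (mod p)" unfolding QuadRes_def by blast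
    have "[(y*w)^2 = x * w^2] (mod p)"
      using cong_mult[OF y cong_refl[of "w^2"]] by (simp add: power_mult_distrib)
    then show "QuadRes p (x * w^2)" unfolding QuadRes_def by blast
  qed
  show ?thesis unfolding Legendre_def using z q by simp
qed

theorem lemma3p3:
  fixes p a :: int and n :: nat
  assumes "prime p" and "odd p"
    and "\<not> [a = 0] (mod p)" and "\<not> [a = 1] (mod p)" and "\<not> [a = -1] (mod p)"
    and "n \<ge> 1"
    and "\<not> [chebyshev_T n a = 1] (mod p)" and "\<not> [chebyshev_T n a = -1] (mod p)"
  shows "eps_sym p (chebyshev_T n a) = eps_sym p a
    \<and> (even n \<longrightarrow> delta_sym p (chebyshev_T n a) = 1)
    \<and> (odd n \<longrightarrow> delta_sym p (chebyshev_T n a) = delta_sym p a)"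
proof -
  define T where "T = chebyshev_T n a"
  define u where "u = snd (tu a n)"
  have Tf: "fst (tu a n) = T" using tu_T T_def by simp
  have nrm: "T^2 - 1 = (a^2 - 1) * u^2" using tu_norm[of a n] Tf u_def by simp
  have pT1: "\<not> p dvd (T - 1)" using assms(7) T_def by (simp add: cong_iff_dvd_diff)
  have pT2: "\<not> p dvd (T + 1)" using assms(8) T_def by (simp add: cong_iff_dvd_diff)
  have "\<not> p dvd u"
  proof
    assume "p dvd u"
    then have "p dvd (a^2 - 1) * u^2" by (simp add: power2_eq_square)
    then have "p dvd T^2 - 1" using nrm by simp
    moreover have "T^2 - 1 = (T - 1) * (T + 1)" by (simp add: algebra_simps power2_eq_square)
    ultimately have "p dvd (T - 1) * (T + 1)" by simp
    then show False using pT1 pT2 assms(1) by (simp add: prime_dvd_mult_iff)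
  qed
  then have E: "eps_sym p T = eps_sym p a"
    unfolding eps_sym_def using nrm legendre_sq[OF assms(1)] by simp
  have p2: "\<not> p dvd 2"
  proof
    assume "p dvd 2"
    then have "p \<le> 2" by (simp add: zdvd_imp_le)
    moreover have "p \<ge> 2" using assms(1) by (simp add: prime_ge_2_int)
    ultimately have "p = 2" by simp
    then show False using assms(2) by simp
  qed
  have D1: "even n \<longrightarrow> delta_sym p T = 1"
  proof
    assume "even n"
    then obtain m where m: "n = m + m" by (metis evenE mult_2)
    define t where "t = fst (tu a m)"
    define v where "v = snd (tu a m)"
    have "T = t*t + (a^2-1)*v*v" using tu_add[of a m m] m Tf t_def v_def by simp
    moreover have "t^2 - (a^2-1)*v^2 = 1" using tu_norm[of a m] t_def v_def by simp
    moreover have "(t*t + (a^2-1)*v*v) + 1 - (2*t)^2 div 2 = - (t^2 - (a^2-1)*v^2) + 1"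
      by (simp add: algebra_simps power2_eq_square)
    ultimately have "T + 1 - (2*t)^2 div 2 = 0" by simp
    moreover have "(2*t)^2 = 2 * (2 * t^2)" by (simp add: power2_eq_square)
    ultimately have eq: "2 * (T + 1) = 1 * (2*t)^2" by simp
    have "\<not> p dvd 2*t"
    proof
      assume "p dvd 2*t"
      then have "p dvd (2*t)^2" by (metis dvd_mult2 power2_eq_square)
      then have "p dvd 2 * (T+1)" using eq by simp
      moreover note p2
      ultimately show False using pT2 prime_dvd_mult_iff[OF assms(1), of 2 "T+1"] by blast
    qed
    then have "Legendre (1 * (2*t)^2) p = Legendre 1 p" by (rule legendre_sq[OF assms(1)])
    then have "Legendre (2*(T+1)) p = Legendre 1 p" using eq by (simp only:)
    moreover have "Legendre 1 p = 1" unfolding Legendre_def QuadRes_def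
      using assms(1) apply (auto simp: cong_0_iff)
      using cong_refl power_one by metis
    ultimately show "delta_sym p T = 1" unfolding delta_sym_def by simp
  qed
  have D2: "odd n \<longrightarrow> delta_sym p T = delta_sym p a"
  proof
    assume "odd n"
    then obtain m where m: "n = Suc (m + m)" by (metis oddE mult_2 Suc_eq_plus1)
    define t where "t = fst (tu a m)"
    define v where "v = snd (tu a m)"
    have "T = a * (t*t + (a^2-1)*v*v) + (a^2-1) * (t*v + v*t)"
      using tu_add[of a m m] m Tf t_def v_def by simp
    moreover have "t^2 - (a^2-1)*v^2 = 1" using tu_norm[of a m] t_def v_def by simp
    moreover have "a * (t*t + (a^2-1)*v*v) + (a^2-1) * (t*v + v*t) - (a+1) * (t + (a-1)*v)^2 = - (t^2 - (a^2-1)*v^2)"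
      by (simp add: algebra_simps power2_eq_square)
    ultimately have "T - (a+1) * (t + (a-1)*v)^2 = -1" by simp
    then have eq: "2 * (T + 1) = (2*(a+1)) * (t + (a-1)*v)^2" by (simp add: algebra_simps)
    have "\<not> p dvd (t + (a-1)*v)"
    proof
      assume "p dvd (t + (a-1)*v)"
      then have "p dvd (2*(a+1)) * (t + (a-1)*v)^2" by (simp add: power2_eq_square)
      then have "p dvd 2 * (T+1)" using eq by simp
      moreover note p2
      ultimately show False using pT2 prime_dvd_mult_iff[OF assms(1), of 2 "T+1"] by blast
    qed
    then have "Legendre ((2*(a+1)) * (t + (a-1)*v)^2) p = Legendre (2*(a+1)) p"
      by (rule legendre_sq[OF assms(1)])
    then show "delta_sym p T = delta_sym p a" unfolding delta_sym_def
      using eq by (simp only:)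
  qed
  show ?thesis using E D1 D2 T_def by simp
qed

end
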